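(* Let $n$ be a positive integer, let $x_0$ be a positive odd integer not divisible by $3$, let $m_0$ be an integer with $0 \le m_0 < 2\cdot 3^n$, and let $m$ be a nonnegative integer with $m \equiv m_0 \pmod{2\cdot 3^n}$. Suppose $x_1 = (2^{m_0}x_0-1)/3$ and $y_1 = (2^{m}x_0-1)/3$ are odd integers. Then $y_1 \equiv x_1 \pmod{2\cdot 3^n}$. *)

theory Defs
  imports "HOL-Number_Theory.Number_Theory"
begin

end

theory Submission imports Defs begin
lemma pow4_cong: "(3::int) ^ (k+1) dvd 4 ^ (3 ^ k) - 1"
proof (induction k)
  case 0 then show ?case by simp
next
  case (Suc k)
  define a :: int where "a = 4 ^ (3 ^ k)"
  have a3: "(4::int) ^ (3 ^ Suc k) = a^3"
  proof -
    have "(3::nat)^Suc k = 3^k * 3" by simp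
    then show ?thesis unfolding a_def by (simp only: power_mult)
  qed
  have e: "(4::int) ^ (3 ^ Suc k) - 1 = (a - 1) * (a^2 + a + 1)"
    unfolding a3 by (simp add: algebra_simps power2_eq_square power3_eq_cube)
  have h: "3 ^ (k+1) dvd a - 1" using Suc unfolding a_def .
  have "3 dvd a - 1" using h unfolding Suc_eq_plus1[symmetric] power_Suc by (rule dvd_mult_left)
  then obtain b where b: "a - 1 = 3 * b" by blast
  then have "a = 3*b+1" by simp
  then have "a^2 + a + 1 = 3 * (3*b^2 + 3*b + 1)"
    by (simp add: algebra_simps power2_eq_square)
  then have "3 dvd a^2 + a + 1" by simp
  from mult_dvd_mono[OF h this] e show ?case unfolding Suc_eq_plus1[symmetric] power_Suc by (simp only: mult.commute)
qed
theorem theorem9: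
  fixes n m0 m :: nat and x0 x1 y1 :: int
  assumes "n \<ge> 1"
    and "x0 > 0" and "odd x0" and "\<not> 3 dvd x0"
    and "m0 < 2 * 3 ^ n"
    and "[m = m0] (mod 2 * 3 ^ n)"
    and "3 * x1 = 2 ^ m0 * x0 - 1" and "odd x1"
    and "3 * y1 = 2 ^ m * x0 - 1" and "odd y1"
  shows "[y1 = x1] (mod 2 * 3 ^ n)"
proof -
  have "m mod (2*3^n) = m0" using assms(5,6) by (simp add: cong_def)
  then obtain t where mt: "m = m0 + 2*3^n*t"
    by (metis mod_mult_div_eq add.commute mult.commute)
  have p: "(2::int)^m = 2^m0 * (4^(3^n))^t"
  proof -
    have "(2::int)^(2*3^n*t) = ((2^2)^(3^n))^t" by (simp only: power_mult)
    moreover have "(2::int)^m = 2^m0 * 2^(2*3^n*t)" by (simp only: mt power_add)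
    ultimately show ?thesis by simp
  qed
  have c1: "[(4::int)^(3^n) = 1] (mod 3^(n+1))"
    using pow4_cong[of n] by (simp add: cong_iff_dvd_diff)
  have "[((4::int)^(3^n))^t = 1] (mod 3^(n+1))"
    using cong_pow[OF c1, of t] by (simp only: power_one)
  then have "3^(n+1) dvd ((4::int)^(3^n))^t - 1" by (simp add: cong_iff_dvd_diff)
  then have "3^(n+1) dvd x0 * 2^m0 * (((4::int)^(3^n))^t - 1)" by (rule dvd_mult)
  also have "x0 * 2^m0 * (((4::int)^(3^n))^t - 1) = 3 * (y1 - x1)"
    using assms(7,9) p by (simp add: right_diff_distrib mult.commute mult.left_commute)
  finally have "3 * 3^n dvd 3 * (y1 - x1)" by (simp only: power_Suc Suc_eq_plus1[symmetric])
  then have d3: "3^n dvd y1 - x1" by (simp only: dvd_mult_cancel_left) simp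
  have d2: "2 dvd y1 - x1" using assms(8,10) by simp
  have "coprime (2::int) (3^n)" by simp
  then have "2 * 3^n dvd y1 - x1" using divides_mult[OF d2 d3] by blast
  then show ?thesis unfolding cong_iff_dvd_diff .
qed
end
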